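(* Let $X \in \mathbb{R}^{n\times p}$, $y \in \mathbb{R}^n$, $\rho > 0$ and let $k$ be a positive integer. Define \[ \nu_{\ell 0} := \min_{\beta \in \mathbb{R}^p,\ \|\beta\|_0 \le k} \ \frac{1}{2}\|X\beta - y\|_2^2 + \frac{1}{2}\rho\|\beta\|_2^2, \] \[ \nu_{PWG} := \min_{t \in \mathbb{R},\ z \in [0,1]^p} \ \frac{1}{2} t \quad \text{s.t.} \quad \begin{bmatrix} t & y^T \\ y & I_n + \frac{1}{\rho} X \mathbf{D}(z) X^T\end{bmatrix} \succeq 0,\quad e^T z \le k, \] \[ \nu_{DCL} := \min_{b \in \mathbb{R}^p,\ B \in \mathcal{S}^p,\ z \in \mathbb{R}^p} \ \frac{1}{2}\left\langle \begin{bmatrix} y^Ty & -y^TX \\ -X^Ty & \rho I_p + X^TX\end{bmatrix}, \begin{bmatrix} 1 & b^T \\ b & B\end{bmatrix}\right\rangle \] subject to $\begin{bmatrix} 1 & b^T \\ b & B\end{bmatrix} \succeq 0$, $\begin{bmatrix} z_i & b_i \\ b_i & B_{ii}\end{bmatrix} \succeq 0$ for all $i = 1,\dots,p$, and $\sum_{i=1}^p z_i \le k$. Then \[ \nu_{\ell 0} \ge \nu_{DCL} \ge \nu_{PWG}. \]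
   Context: $\|\beta\|_0$ denotes the number of nonzero entries of $\beta$. $e$ is the all-ones vector of appropriate dimension, $\mathbf{D}(z)$ is the $p\times p$ diagonal matrix with diagonal entries $z_1,\dots,z_p$, $\mathcal{S}^p$ is the space of real symmetric $p\times p$ matrices, $\succeq 0$ denotes positive semidefiniteness, and $\langle A, C\rangle = \mathrm{trace}(A^T C)$ is the trace inner product. *)

theory Defs
  imports "HOL-Analysis.Analysis"
begin

definition psd :: "real^'m^'m \<Rightarrow> bool" where
  "psd A \<longleftrightarrow> transpose A = A \<and> (\<forall>x. 0 \<le> x \<bullet> (A *v x))"

definition l0norm :: "real^'p \<Rightarrow> nat" where
  "l0norm b = card {i. b $ i \<noteq> 0}"

definition diagm :: "real^'p \<Rightarrow> real^'p^'p" where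
  "diagm z = (\<chi> i j. if i = j then z $ i else 0)"

definition tinner :: "real^'m^'m \<Rightarrow> real^'m^'m \<Rightarrow> real" where
  "tinner A C = trace (transpose A ** C)"

text \<open>Block matrix [[a, v^T],[v, M]]; the index None is the first row/column.\<close>
definition blockmat :: "real \<Rightarrow> real^'n \<Rightarrow> real^'n^'n \<Rightarrow> real^('n option)^('n option)" where
  "blockmat a v M = (\<chi> i j. case i of
      None \<Rightarrow> (case j of None \<Rightarrow> a | Some j' \<Rightarrow> v $ j')
    | Some i' \<Rightarrow> (case j of None \<Rightarrow> v $ i' | Some j' \<Rightarrow> M $ i' $ j'))"

definition nu_l0 :: "real^'p^'n \<Rightarrow> real^'n \<Rightarrow> real \<Rightarrow> nat \<Rightarrow> real" where
  "nu_l0 X y \<rho> k = Inf {(1/2) * (norm (X *v \<beta> - y))^2 + (1/2) * \<rho> * (norm \<beta>)^2 | \<beta>. l0norm \<beta> \<le> k}"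

definition nu_PWG :: "real^'p^'n \<Rightarrow> real^'n \<Rightarrow> real \<Rightarrow> nat \<Rightarrow> real" where
  "nu_PWG X y \<rho> k = Inf {(1/2) * t | t z.
      (\<forall>i. 0 \<le> z $ i \<and> z $ i \<le> 1) \<and>
      psd (blockmat t y (mat 1 + (1/\<rho>) *\<^sub>R (X ** diagm z ** transpose X))) \<and>
      (\<Sum>i\<in>UNIV. z $ i) \<le> real k}"

definition nu_DCL :: "real^'p^'n \<Rightarrow> real^'n \<Rightarrow> real \<Rightarrow> nat \<Rightarrow> real" where
  "nu_DCL X y \<rho> k = Inf {(1/2) * tinner
        (blockmat (y \<bullet> y) (- (transpose X *v y)) (\<rho> *\<^sub>R mat 1 + transpose X ** X))
        (blockmat 1 b B) | b B z.
      transpose B = B \<and>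
      psd (blockmat 1 b B) \<and>
      (\<forall>i. psd (vector [vector [z $ i, b $ i], vector [b $ i, B $ i $ i]] :: real^2^2)) \<and>
      (\<Sum>i\<in>UNIV. z $ i) \<le> real k}"

end

theory Submission imports Defs begin

lemma sum_option: "(\<Sum>i\<in>(UNIV::'a::finite option set). f i) = f None + (\<Sum>i\<in>UNIV. f (Some i))"
proof -
  have "(\<Sum>i\<in>(UNIV::'a option set). f i) = f None + sum f (range Some)"
    unfolding UNIV_option_conv by (subst sum.insert) auto
  also have "sum f (range Some) = (\<Sum>i\<in>UNIV. f (Some i))"
    by (subst sum.reindex) (auto intro: inj_Some)
  finally show ?thesis .
qed

definition ext :: "real \<Rightarrow> real^'n \<Rightarrow> real^('n option)" where
  "ext s w = (\<chi> i. case i of None \<Rightarrow> s | Some j \<Rightarrow> w $ j)"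

lemma blockmat_quad:
  fixes M :: "real^'n^'n"
  shows "ext s w \<bullet> (blockmat a v M *v ext s w) = a * s^2 + 2 * s * (v \<bullet> w) + w \<bullet> (M *v w)"
  unfolding ext_def blockmat_def inner_vec_def matrix_vector_mult_def
  by (simp add: sum_option sum.distrib sum_distrib_left algebra_simps power2_eq_square)

lemma ext_surj: "x = ext (x $ None) (\<chi> i. x $ Some i)"
  unfolding ext_def by (simp add: vec_eq_iff split: option.splits)

lemma transpose_blockmat: "transpose (blockmat a v M) = blockmat a v (transpose M)"
  unfolding blockmat_def transpose_def by (simp add: vec_eq_iff split: option.splits)

lemma psd_blockmatI:
  assumes "transpose M = M" "\<And>s w. 0 \<le> a * s^2 + 2 * s * (v \<bullet> w) + w \<bullet> (M *v w)"
  shows "psd (blockmat a v M)"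
  unfolding psd_def
proof
  show "transpose (blockmat a v M) = blockmat a v M" using assms(1) by (simp add: transpose_blockmat)
  show "\<forall>x. 0 \<le> x \<bullet> (blockmat a v M *v x)"
  proof
    fix x :: "real^('a option)"
    show "0 \<le> x \<bullet> (blockmat a v M *v x)"
      by (subst (1 2) ext_surj) (simp only: blockmat_quad assms(2))
  qed
qed

lemma psd_blockmatD:
  assumes "psd (blockmat a v M)"
  shows "0 \<le> a * s^2 + 2 * s * (v \<bullet> w) + w \<bullet> (M *v w)"
  using assms unfolding psd_def by (metis blockmat_quad)

lemma quad2: "(x::real^2) \<bullet> ((vector [vector [a,c], vector [c,d]] :: real^2^2) *v x)
   = a*(x$1)^2 + 2*c*(x$1)*(x$2) + d*(x$2)^2"
  unfolding inner_vec_def matrix_vector_mult_def by (simp add: sum_2 algebra_simps power2_eq_square)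

lemma psd2D:
  assumes "psd (vector [vector [a,c], vector [c,d]] :: real^2^2)"
  shows "0 \<le> a \<and> 0 \<le> d \<and> c^2 \<le> a*d"
proof -
  have q: "0 \<le> a*x1^2 + 2*c*x1*x2 + d*x2^2" for x1 x2
    using assms unfolding psd_def
    by (metis quad2 vector_1 vector_2)
  have a: "0 \<le> a" using q[of 1 0] by simp
  have d: "0 \<le> d" using q[of 0 1] by simp
  have 1: "0 \<le> a*(a*d - c^2)" using q[of "-c" a] by (simp add: algebra_simps power2_eq_square)
  have 2: "0 \<le> d*(a*d - c^2)" using q[of d "-c"] by (simp add: algebra_simps power2_eq_square)
  have 3: "0 \<le> a - 2*c^2 + d*c^2" using q[of 1 "-c"] by (simp add: algebra_simps power2_eq_square)
  have "c^2 \<le> a*d"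
  proof (cases "a > 0")
    case True then show ?thesis using 1 by (simp add: zero_le_mult_iff)
  next
    case False
    then have "a = 0" using a by simp
    show ?thesis
    proof (cases "d > 0")
      case True then show ?thesis using 2 by (simp add: zero_le_mult_iff)
    next
      case False then have "d = 0" using d by simp
      then show ?thesis using 3 \<open>a = 0\<close> by simp
    qed
  qed
  then show ?thesis using a d by simp
qed

lemma psd2I:
  assumes "0 \<le> a" "0 \<le> d" "c^2 \<le> a*d"
  shows "psd (vector [vector [a,c], vector [c,d]] :: real^2^2)"
  unfolding psd_def
proof
  show "transpose (vector [vector [a, c], vector [c, d]] :: real^2^2) = vector [vector [a, c], vector [c, d]]"
    unfolding transpose_def by (simp add: vec_eq_iff forall_2)
  show "\<forall>x. 0 \<le> x \<bullet> ((vector [vector [a, c], vector [c, d]] :: real^2^2) *v x)"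
  proof
    fix x :: "real^2"
    have "0 \<le> a*(x$1)^2 + 2*c*(x$1)*(x$2) + d*(x$2)^2"
    proof (cases "a > 0")
      case True
      have "a*(a*(x$1)^2 + 2*c*(x$1)*(x$2) + d*(x$2)^2) = (a*x$1 + c*x$2)^2 + (a*d - c^2)*(x$2)^2"
        by (simp add: algebra_simps power2_eq_square)
      also have "\<dots> \<ge> 0" using assms by simp
      finally show ?thesis using True by (simp add: zero_le_mult_iff)
    next
      case False
      then have "a = 0" using assms by simp
      then have "c = 0" using assms by simp
      then show ?thesis using \<open>a = 0\<close> assms by simp
    qed
    then show "0 \<le> x \<bullet> ((vector [vector [a, c], vector [c, d]] :: real^2^2) *v x)" by (simp only: quad2)
  qed
qed


lemma scaleR_mat_mult: "((c::real) *\<^sub>R A) *v x = c *\<^sub>R (A *v (x::real^_))"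
  by (simp add: vec_eq_iff matrix_vector_mult_def sum_distrib_left mult.assoc)

lemma inner_mat_vec: "(w::real^'n) \<bullet> (X *v v) = (transpose X *v w) \<bullet> v"
  by (simp add: dot_lmul_matrix)

lemma diagm_mult: "diagm z *v u = (\<chi> i. z$i * u$i)"
  unfolding diagm_def matrix_vector_mult_def
  by (simp add: vec_eq_iff if_distrib[of "\<lambda>x. x * _"] cong: if_cong)

lemma quad_PWG:
  fixes X :: "real^'p^'n"
  shows "w \<bullet> ((mat 1 + c *\<^sub>R (X ** diagm z ** transpose X)) *v w)
     = w \<bullet> w + c * (\<Sum>i\<in>UNIV. z$i * ((transpose X *v w)$i)^2)"
proof -
  have "w \<bullet> ((X ** diagm z ** transpose X) *v w) = (\<Sum>i\<in>UNIV. z$i * ((transpose X *v w)$i)^2)"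
  proof -
    have "w \<bullet> ((X ** diagm z ** transpose X) *v w) = w \<bullet> (X *v (diagm z *v (transpose X *v w)))"
      by (simp only: matrix_vector_mul_assoc matrix_mul_assoc)
    also have "\<dots> = (transpose X *v w) \<bullet> (diagm z *v (transpose X *v w))"
      by (rule inner_mat_vec)
    also have "\<dots> = (\<Sum>i\<in>UNIV. z$i * ((transpose X *v w)$i)^2)"
      unfolding diagm_mult inner_vec_def by (simp add: power2_eq_square mult_ac)
    finally show ?thesis .
  qed
  then show ?thesis
    by (simp add: matrix_vector_mult_add_rdistrib scaleR_mat_mult inner_add_right)
qed

lemma transpose_diagm: "transpose (diagm z) = diagm z"
  unfolding diagm_def transpose_def by (simp add: vec_eq_iff)

lemma transpose_add_m: "transpose (A + B) = transpose A + transpose (B::real^'n^'m)"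
  unfolding transpose_def by (simp add: vec_eq_iff)

lemma sym_PWG: "transpose (mat 1 + c *\<^sub>R (X ** diagm z ** transpose X)) = mat 1 + c *\<^sub>R (X ** diagm z ** transpose (X::real^'p^'n))"
  by (simp add: transpose_add_m transpose_scalar matrix_transpose_mul transpose_diagm matrix_mul_assoc)

lemma tinner_blockmat:
  fixes M N :: "real^'n^'n"
  shows "tinner (blockmat a v M) (blockmat c w N) = a*c + 2*(v \<bullet> w) + (\<Sum>i\<in>UNIV. \<Sum>j\<in>UNIV. M$i$j * N$i$j)"
  unfolding tinner_def trace_def matrix_matrix_mult_def transpose_def blockmat_def inner_vec_def
  by (simp add: sum_option sum.distrib) (rule sum.swap)


lemma row_mult: "(X *v b) $ m = (X$m) \<bullet> (b::real^'p)"
  by (simp add: matrix_vector_mult_def inner_vec_def mult.commute)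

lemma obj_expand:
  fixes X :: "real^'p^'n" and B :: "real^'p^'p"
  shows "tinner (blockmat (y \<bullet> y) (- (transpose X *v y)) (\<rho> *\<^sub>R mat 1 + transpose X ** X)) (blockmat 1 b B)
    = y \<bullet> y - 2*((transpose X *v y) \<bullet> b) + \<rho>*(\<Sum>i\<in>UNIV. B$i$i) + (\<Sum>m\<in>UNIV. X$m \<bullet> (B *v X$m))"
proof -
  have 1: "(\<Sum>i\<in>UNIV. \<Sum>j\<in>UNIV. (\<rho> *\<^sub>R mat 1 + transpose X ** X)$i$j * B$i$j)
     = (\<Sum>i\<in>UNIV. \<Sum>j\<in>UNIV. (if i = j then \<rho> * B$i$j else 0)) + (\<Sum>i\<in>UNIV. \<Sum>j\<in>UNIV. (transpose X ** X)$i$j * B$i$j)"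
    by (simp add: mat_def distrib_right sum.distrib  if_distrib[of "\<lambda>x. x * _"] if_distrib[of "\<lambda>x. _ * x"] cong: if_cong)
  have 2: "(\<Sum>i\<in>UNIV. \<Sum>j\<in>UNIV. (if i = j then \<rho> * B$i$j else 0)) = \<rho>*(\<Sum>i\<in>UNIV. B$i$i)"
    by (simp add: sum_distrib_left)
  have 3: "(\<Sum>i\<in>UNIV. \<Sum>j\<in>UNIV. (transpose X ** X)$i$j * B$i$j) = (\<Sum>m\<in>UNIV. X$m \<bullet> (B *v X$m))"
  proof -
    have "(\<Sum>i\<in>UNIV. \<Sum>j\<in>UNIV. (transpose X ** X)$i$j * B$i$j)
       = (\<Sum>i\<in>UNIV. \<Sum>j\<in>UNIV. \<Sum>m\<in>UNIV. X$m$i * X$m$j * B$i$j)"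
      by (simp add: matrix_matrix_mult_def transpose_def sum_distrib_right)
    also have "\<dots> = (\<Sum>i\<in>UNIV. \<Sum>m\<in>UNIV. \<Sum>j\<in>UNIV. X$m$i * X$m$j * B$i$j)"
      by (rule sum.cong[OF refl], rule sum.swap)
    also have "\<dots> = (\<Sum>m\<in>UNIV. \<Sum>i\<in>UNIV. \<Sum>j\<in>UNIV. X$m$i * X$m$j * B$i$j)"
      by (rule sum.swap)
    also have "\<dots> = (\<Sum>m\<in>UNIV. X$m \<bullet> (B *v X$m))"
      unfolding inner_vec_def matrix_vector_mult_def
      by (simp add: sum_distrib_left mult_ac)
    finally show ?thesis .
  qed
  show ?thesis unfolding tinner_blockmat 1 2 3 by (simp add: inner_minus_left)
qed

lemma norm_expand:
  fixes X :: "real^'p^'n"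
  shows "(norm (X *v b - y))^2 = y \<bullet> y - 2*((transpose X *v y) \<bullet> b) + (\<Sum>m\<in>UNIV. (X$m \<bullet> b)^2)"
proof -
  have a: "(X *v b) \<bullet> y = (transpose X *v y) \<bullet> b"
    by (metis inner_commute inner_mat_vec)
  have c: "(X *v b) \<bullet> (X *v b) = (\<Sum>m\<in>UNIV. (X$m \<bullet> b)^2)"
    by (simp add: inner_vec_def row_mult power2_eq_square)
  have d: "(X *v b - y) \<bullet> (X *v b - y) = (X *v b) \<bullet> (X *v b) - 2*((X *v b) \<bullet> y) + y \<bullet> y"
    by (simp add: inner_diff_left inner_diff_right inner_commute[of y "X *v b"])
  show ?thesis unfolding power2_norm_eq_inner d a c by simp
qed

lemma outer_quad: "w \<bullet> ((\<chi> i j. \<beta>$i * \<beta>$j) *v w) = (\<beta> \<bullet> (w::real^'p))^2"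
  by (simp add: inner_vec_def matrix_vector_mult_def power2_eq_square sum_product sum_distrib_left mult_ac)


lemma basis_quad: "axis i 1 \<bullet> ((B::real^'p^'p) *v axis i 1) = B$i$i"
  by (simp add: matrix_vector_mult_basis inner_axis' column_def)

lemma term_nonneg:
  fixes \<rho> zz bb uu s :: real
  assumes "\<rho> > 0" "0 \<le> zz" "zz = 0 \<Longrightarrow> bb = 0"
  shows "0 \<le> \<rho> * s^2 * (if zz = 0 then 0 else bb^2/zz) + 2 * s * bb*uu + (1/\<rho>)*zz*uu^2"
proof (cases "zz = 0")
  case True then show ?thesis using assms by simp
next
  case False
  then have zp: "zz > 0" using assms by simp
  have "\<rho> * s^2 * (if zz = 0 then 0 else bb^2/zz) + 2 * s * bb*uu + (1/\<rho>)*zz*uu^2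
      = (\<rho> * s * bb + zz*uu)^2 / (\<rho>*zz)"
    using False assms(1) by (simp add: field_simps power2_eq_square)
  also have "\<dots> \<ge> 0" using zp assms(1) by simp
  finally show ?thesis .
qed

lemma PWG_psd:
  fixes X :: "real^'p^'n"
  assumes rho: "\<rho> > 0" and z0: "\<And>i. 0 \<le> z$i" and zb: "\<And>i. z$i = 0 \<Longrightarrow> b$i = 0"
  and t: "t = (norm (X *v b - y))^2 + \<rho> * (\<Sum>i\<in>UNIV. if z$i = 0 then 0 else (b$i)^2 / z$i)"
  shows "psd (blockmat t y (mat 1 + (1/\<rho>) *\<^sub>R (X ** diagm z ** transpose X)))"
proof (rule psd_blockmatI[OF sym_PWG])
  fix s :: real and w :: "real^'n"
  define r where "r = X *v b - y"
  define u where "u = transpose X *v w"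
  define q where "q = (\<lambda>i. if z$i = 0 then 0 else (b$i)^2 / z$i)"
  have yw: "y \<bullet> w = u \<bullet> b - r \<bullet> w"
    unfolding r_def u_def using inner_mat_vec[of w X b]
    by (simp add: inner_diff_left inner_commute[of "X *v b" w] inner_commute[of y w])
  have ub: "u \<bullet> b = (\<Sum>i\<in>UNIV. b$i * u$i)" by (simp add: inner_vec_def mult.commute)
  have ww: "(w - s *\<^sub>R r) \<bullet> (w - s *\<^sub>R r) = w \<bullet> w - 2 * s * (r \<bullet> w) + s^2 * (r \<bullet> r)"
    by (simp add: inner_diff_left inner_diff_right inner_commute[of r w] power2_eq_square algebra_simps)
  have sm: "(\<Sum>i\<in>UNIV. \<rho> * s^2 * q i + 2 * s * (b$i)*(u$i) + (1/\<rho>)*(z$i)*(u$i)^2)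
     = \<rho> * s^2 * (\<Sum>i\<in>UNIV. q i) + 2 * s * (\<Sum>i\<in>UNIV. b$i * u$i) + (1/\<rho>) * (\<Sum>i\<in>UNIV. z$i * (u$i)^2)"
    by (simp add: sum.distrib sum_distrib_left mult.assoc)
  have tt: "t = r \<bullet> r + \<rho> * (\<Sum>i\<in>UNIV. q i)"
    unfolding t r_def q_def power2_norm_eq_inner ..
  have alg: "\<And>tt RR Q A R W Z c. tt = RR + \<rho> * Q \<Longrightarrow>
     tt * s^2 + 2 * s * (A - R) + (W + c * Z) = (W - 2 * s * R + s^2 * RR) + (\<rho> * s^2 * Q + 2 * s * A + c * Z)"
    by (simp add: algebra_simps)
  have e: "t * s^2 + 2 * s * (y \<bullet> w) + w \<bullet> ((mat 1 + (1/\<rho>) *\<^sub>R (X ** diagm z ** transpose X)) *v w)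
     = (w - s *\<^sub>R r) \<bullet> (w - s *\<^sub>R r) + (\<Sum>i\<in>UNIV. \<rho> * s^2 * q i + 2 * s * (b$i)*(u$i) + (1/\<rho>)*(z$i)*(u$i)^2)"
    unfolding quad_PWG yw ub ww sm u_def[symmetric] by (rule alg[OF tt])
  have "0 \<le> (\<Sum>i\<in>UNIV. \<rho> * s^2 * q i + 2 * s * (b$i)*(u$i) + (1/\<rho>)*(z$i)*(u$i)^2)"
    unfolding q_def by (rule sum_nonneg) (rule term_nonneg[OF rho z0 zb])
  then show "0 \<le> t * s^2 + 2 * s * (y \<bullet> w) + w \<bullet> ((mat 1 + (1/\<rho>) *\<^sub>R (X ** diagm z ** transpose X)) *v w)"
    unfolding e by simp
qed


lemma DCL_bound:
  fixes X :: "real^'p^'n" and B :: "real^'p^'p"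
  assumes rho: "\<rho> > 0"
    and W: "psd (blockmat 1 b B)"
    and Z: "\<forall>i. psd (vector [vector [z $ i, b $ i], vector [b $ i, B $ i $ i]] :: real^2^2)"
    and S: "(\<Sum>i\<in>UNIV. z $ i) \<le> real k"
  shows "\<exists>t z'. (\<forall>i. 0 \<le> z' $ i \<and> z' $ i \<le> 1) \<and>
      psd (blockmat t y (mat 1 + (1/\<rho>) *\<^sub>R (X ** diagm z' ** transpose X))) \<and>
      (\<Sum>i\<in>UNIV. z' $ i) \<le> real k \<and>
      (1/2) * t \<le> (1/2) * tinner
        (blockmat (y \<bullet> y) (- (transpose X *v y)) (\<rho> *\<^sub>R mat 1 + transpose X ** X))
        (blockmat 1 b B)"
proof -
  have z0: "0 \<le> z$i" and zB: "(b$i)^2 \<le> z$i * B$i$i" for i using psd2D[OF Z[rule_format, of i]] by auto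
  have Bii: "(b$i)^2 \<le> B$i$i" for i
    using psd_blockmatD[OF W, of "- (b$i)" "axis i 1"] by (simp add: basis_quad inner_axis power2_eq_square)
  have rowq: "(X$m \<bullet> b)^2 \<le> X$m \<bullet> (B *v X$m)" for m
    using psd_blockmatD[OF W, of "- (b \<bullet> X$m)" "X$m"] by (simp add: power2_eq_square inner_commute)
  define z' where "z' = (\<chi> i. min (z$i) 1)"
  define t where "t = (norm (X *v b - y))^2 + \<rho> * (\<Sum>i\<in>UNIV. if z'$i = 0 then 0 else (b$i)^2 / z'$i)"
  have z'0: "0 \<le> z'$i" and z'1: "z'$i \<le> 1" for i unfolding z'_def using z0 by auto
  have z'b: "z'$i = 0 \<Longrightarrow> b$i = 0" for i
  proof -
    assume "z'$i = 0"
    then have "z$i = 0" unfolding z'_def by (auto simp: min_def split: if_splits)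
    then show "b$i = 0" using zB[of i] by simp
  qed
  have qB: "(if z'$i = 0 then 0 else (b$i)^2 / z'$i) \<le> B$i$i" for i
  proof (cases "z'$i = 0")
    case True then show ?thesis using Bii[of i] by (smt (verit) zero_le_power2)
  next
    case False
    then have pos: "z'$i > 0" using z'0[of i] by simp
    show ?thesis
    proof (cases "z$i \<le> 1")
      case True
      then have "z'$i = z$i" unfolding z'_def by simp
      then show ?thesis using False pos zB[of i] by (simp add: divide_le_eq mult.commute)
    next
      case False
      then have "z'$i = 1" unfolding z'_def by simp
      then show ?thesis using Bii[of i] by simp
    qed
  qed
  have sum': "(\<Sum>i\<in>UNIV. z' $ i) \<le> real k"
    using S by (smt (verit) sum_mono z'_def min.cobounded1 vec_lambda_beta)
  have psdP: "psd (blockmat t y (mat 1 + (1/\<rho>) *\<^sub>R (X ** diagm z' ** transpose X)))"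
    by (rule PWG_psd[OF rho z'0 z'b t_def])
  have "t \<le> tinner (blockmat (y \<bullet> y) (- (transpose X *v y)) (\<rho> *\<^sub>R mat 1 + transpose X ** X)) (blockmat 1 b B)"
  proof -
    have a: "(\<Sum>i\<in>UNIV. if z'$i = 0 then 0 else (b$i)^2 / z'$i) \<le> (\<Sum>i\<in>UNIV. B$i$i)"
      by (rule sum_mono) (rule qB)
    have c: "(\<Sum>m\<in>UNIV. (X$m \<bullet> b)^2) \<le> (\<Sum>m\<in>UNIV. X$m \<bullet> (B *v X$m))"
      by (rule sum_mono) (rule rowq)
    show ?thesis unfolding obj_expand t_def norm_expand
      using a c mult_left_mono[OF a, of \<rho>] rho by linarith
  qed
  then show ?thesis using z'0 z'1 psdP sum' by (intro exI[of _ t] exI[of _ z']) auto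
qed


theorem proposition1:
  fixes X :: "real^'p^'n" and y :: "real^'n" and \<rho> :: real and k :: nat
  assumes "\<rho> > 0" and "k \<ge> 1"
  shows "nu_l0 X y \<rho> k \<ge> nu_DCL X y \<rho> k \<and> nu_DCL X y \<rho> k \<ge> nu_PWG X y \<rho> k"
proof -
  define SP where "SP = {(1/2) * t | t z.
      (\<forall>i. 0 \<le> z $ i \<and> z $ i \<le> 1) \<and>
      psd (blockmat t y (mat 1 + (1/\<rho>) *\<^sub>R (X ** diagm z ** transpose X))) \<and>
      (\<Sum>i\<in>UNIV. z $ i) \<le> real k}"
  define obj where "obj = (\<lambda>b (B::real^'p^'p). (1/2) * tinner
        (blockmat (y \<bullet> y) (- (transpose X *v y)) (\<rho> *\<^sub>R mat 1 + transpose X ** X))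
        (blockmat 1 b B))"
  define SD where "SD = {obj b B | b B z.
      transpose B = B \<and>
      psd (blockmat 1 b B) \<and>
      (\<forall>i. psd (vector [vector [z $ i, b $ i], vector [b $ i, B $ i $ i]] :: real^2^2)) \<and>
      (\<Sum>i\<in>UNIV. z $ i) \<le> real k}"
  define SL where "SL = {(1/2) * (norm (X *v \<beta> - y))^2 + (1/2) * \<rho> * (norm \<beta>)^2 | \<beta>. l0norm \<beta> \<le> k}"
  have PWG: "nu_PWG X y \<rho> k = Inf SP" unfolding nu_PWG_def SP_def ..
  have DCL: "nu_DCL X y \<rho> k = Inf SD" unfolding nu_DCL_def SD_def obj_def ..
  have L0: "nu_l0 X y \<rho> k = Inf SL" unfolding nu_l0_def SL_def ..
  have bddP: "bdd_below SP"
  proof (rule bdd_belowI[of _ 0])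
    fix x assume "x \<in> SP"
    then obtain t z where xt: "x = (1/2) * t" and ps: "psd (blockmat t y (mat 1 + (1/\<rho>) *\<^sub>R (X ** diagm z ** transpose X)))"
      unfolding SP_def by blast
    have "0 \<le> t" using psd_blockmatD[OF ps, of 1 0] by simp
    then show "0 \<le> x" using xt by simp
  qed
  have D_ge: "Inf SP \<le> d" if "d \<in> SD" for d
  proof -
    from that obtain b B z where d: "d = obj b B" and W: "psd (blockmat 1 b B)"
      and Z: "\<forall>i. psd (vector [vector [z $ i, b $ i], vector [b $ i, B $ i $ i]] :: real^2^2)"
      and S: "(\<Sum>i\<in>UNIV. z $ i) \<le> real k" unfolding SD_def by blast
    from DCL_bound[OF assms(1) W Z S, where X=X and y=y] obtain t z' where
      "(\<forall>i. 0 \<le> z' $ i \<and> z' $ i \<le> 1)"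
      "psd (blockmat t y (mat 1 + (1/\<rho>) *\<^sub>R (X ** diagm z' ** transpose X)))"
      "(\<Sum>i\<in>UNIV. z' $ i) \<le> real k" and le: "(1/2) * t \<le> d"
      unfolding d obj_def by blast
    then have "(1/2) * t \<in> SP" unfolding SP_def by blast
    then have "Inf SP \<le> (1/2) * t" by (rule cInf_lower[OF _ bddP])
    then show ?thesis using le by simp
  qed
  have SDne: "SD \<noteq> {}"
  proof -
    have "psd (blockmat 1 0 (0::real^'p^'p))"
      by (rule psd_blockmatI) (auto simp: transpose_def vec_eq_iff)
    moreover have "psd (vector [vector [0, 0], vector [0, 0]] :: real^2^2)"
      by (rule psd2I) auto
    ultimately have "obj 0 0 \<in> SD" unfolding SD_def
      by (intro CollectI exI[of _ "0::real^'p"] exI[of _ "0::real^'p^'p"] exI[of _ "0::real^'p"])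
         (auto simp: transpose_def vec_eq_iff)
    then show ?thesis by blast
  qed
  have bddD: "bdd_below SD" using D_ge by (rule bdd_belowI)
  have part2: "Inf SP \<le> Inf SD" by (rule cInf_greatest[OF SDne D_ge])
  have L_in: "x \<in> SD" if "x \<in> SL" for x
  proof -
    from that obtain \<beta> where x: "x = (1/2) * (norm (X *v \<beta> - y))^2 + (1/2) * \<rho> * (norm \<beta>)^2"
      and l0: "l0norm \<beta> \<le> k" unfolding SL_def by blast
    define B where "B = ((\<chi> i j. \<beta>$i * \<beta>$j) :: real^'p^'p)"
    define z where "z = ((\<chi> i. if \<beta>$i = 0 then 0 else 1) :: real^'p)"
    have symB: "transpose B = B" unfolding B_def transpose_def by (simp add: vec_eq_iff mult.commute)
    have W: "psd (blockmat 1 \<beta> B)"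
    proof (rule psd_blockmatI[OF symB])
      fix s w
      have "1 * s\<^sup>2 + 2 * s * (\<beta> \<bullet> w) + w \<bullet> (B *v w) = (s + \<beta> \<bullet> w)^2"
        unfolding B_def outer_quad by (simp add: power2_eq_square algebra_simps)
      then show "0 \<le> 1 * s\<^sup>2 + 2 * s * (\<beta> \<bullet> w) + w \<bullet> (B *v w)" by simp
    qed
    have Z: "\<forall>i. psd (vector [vector [z $ i, \<beta> $ i], vector [\<beta> $ i, B $ i $ i]] :: real^2^2)"
      by (auto intro!: psd2I simp: z_def B_def power2_eq_square)
    have S: "(\<Sum>i\<in>UNIV. z $ i) \<le> real k"
    proof -
      have "(\<Sum>i\<in>UNIV. z $ i) = real (card {i. \<beta> $ i \<noteq> 0})"
        unfolding z_def by (simp add: sum.If_cases) (simp add: Collect_neg_eq)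
      then show ?thesis using l0 unfolding l0norm_def by simp
    qed
    have "obj \<beta> B = x"
    proof -
      have 1: "(\<Sum>i\<in>UNIV. B$i$i) = (norm \<beta>)^2"
        unfolding B_def power2_norm_eq_inner inner_vec_def by simp
      have 2: "(\<Sum>m\<in>UNIV. X$m \<bullet> (B *v X$m)) = (\<Sum>m\<in>UNIV. (X$m \<bullet> \<beta>)^2)"
        unfolding B_def outer_quad by (simp add: inner_commute)
      show ?thesis unfolding obj_def obj_expand x norm_expand 1 2 by (simp add: algebra_simps)
    qed
    then show ?thesis unfolding SD_def using symB W Z S by blast
  qed
  have SLne: "SL \<noteq> {}"
  proof -
    have "l0norm (0::real^'p) \<le> k" unfolding l0norm_def by simp
    then show ?thesis unfolding SL_def by blast
  qed
  have part1: "Inf SD \<le> Inf SL"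
    by (rule cInf_greatest[OF SLne]) (rule cInf_lower[OF L_in bddD])
  show ?thesis using part1 part2 PWG DCL L0 by simp
qed

end
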